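(* Let $G$ be a graph and $t$ a positive integer. If $\varphi(G)\ge t$, then $G$ contains an induced subgraph which is a minimal b-$t$-atom.
   Context: A proper $k$-coloring of $G$ is a surjective map $c:V(G)\to\{1,\ldots,k\}$ with $c(u)\ne c(v)$ for every edge $uv$. In a proper $k$-coloring, a vertex of color $i$ is a b-vertex if it has a neighbor of every color $j\in\{1,\ldots,k\}\setminus\{i\}$. A b-$k$-coloring is a proper $k$-coloring in which every color class contains a b-vertex; the b-chromatic number $\varphi(G)$ is the largest $k$ such that $G$ has a b-$k$-coloring. A b-$t$-atom is a graph $A$ whose vertex set can be partitioned into $t$ sets $D_1,\ldots,D_t$, each $D_i$ containing a special vertex $c_i$, such that each $D_i$ is independent with $|D_i|\le t$ and, for all $i\ne j$, $c_i$ has a neighbor in $D_j$. A b-$t$-atom is minimal if no proper induced subgraph of it is a b-$t$-atom. *)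

theory Defs
  imports Main
begin

definition graph :: "'a set \<Rightarrow> ('a \<Rightarrow> 'a \<Rightarrow> bool) \<Rightarrow> bool" where
  "graph V E \<longleftrightarrow> finite V \<and> (\<forall>u v. E u v \<longrightarrow> u \<in> V \<and> v \<in> V)
     \<and> (\<forall>u v. E u v \<longrightarrow> E v u) \<and> (\<forall>v. \<not> E v v)"

definition induced :: "('a \<Rightarrow> 'a \<Rightarrow> bool) \<Rightarrow> 'a set \<Rightarrow> 'a \<Rightarrow> 'a \<Rightarrow> bool" where
  "induced E S = (\<lambda>u v. E u v \<and> u \<in> S \<and> v \<in> S)"

definition proper_coloring :: "'a set \<Rightarrow> ('a \<Rightarrow> 'a \<Rightarrow> bool) \<Rightarrow> ('a \<Rightarrow> nat) \<Rightarrow> nat \<Rightarrow> bool" where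
  "proper_coloring V E c k \<longleftrightarrow> c ` V = {1..k}
     \<and> (\<forall>u\<in>V. \<forall>v\<in>V. E u v \<longrightarrow> c u \<noteq> c v)"

definition b_vertex :: "'a set \<Rightarrow> ('a \<Rightarrow> 'a \<Rightarrow> bool) \<Rightarrow> ('a \<Rightarrow> nat) \<Rightarrow> nat \<Rightarrow> 'a \<Rightarrow> bool" where
  "b_vertex V E c k v \<longleftrightarrow> (\<forall>j\<in>{1..k} - {c v}. \<exists>u\<in>V. E v u \<and> c u = j)"

definition b_coloring :: "'a set \<Rightarrow> ('a \<Rightarrow> 'a \<Rightarrow> bool) \<Rightarrow> ('a \<Rightarrow> nat) \<Rightarrow> nat \<Rightarrow> bool" where
  "b_coloring V E c k \<longleftrightarrow> proper_coloring V E c k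
     \<and> (\<forall>i\<in>{1..k}. \<exists>v\<in>V. c v = i \<and> b_vertex V E c k v)"

definition b_chromatic_number :: "'a set \<Rightarrow> ('a \<Rightarrow> 'a \<Rightarrow> bool) \<Rightarrow> nat" where
  "b_chromatic_number V E = Max {k. \<exists>c. b_coloring V E c k}"

definition b_atom :: "'a set \<Rightarrow> ('a \<Rightarrow> 'a \<Rightarrow> bool) \<Rightarrow> nat \<Rightarrow> bool" where
  "b_atom V E t \<longleftrightarrow> (\<exists>(D :: nat \<Rightarrow> 'a set) (cv :: nat \<Rightarrow> 'a).
      (\<Union>i\<in>{1..t}. D i) = V
    \<and> (\<forall>i\<in>{1..t}. \<forall>j\<in>{1..t}. i \<noteq> j \<longrightarrow> D i \<inter> D j = {})
    \<and> (\<forall>i\<in>{1..t}. cv i \<in> D i \<and> card (D i) \<le> t \<and> (\<forall>u\<in>D i. \<forall>v\<in>D i. \<not> E u v))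
    \<and> (\<forall>i\<in>{1..t}. \<forall>j\<in>{1..t}. i \<noteq> j \<longrightarrow> (\<exists>u\<in>D j. E (cv i) u)))"

definition minimal_b_atom :: "'a set \<Rightarrow> ('a \<Rightarrow> 'a \<Rightarrow> bool) \<Rightarrow> nat \<Rightarrow> bool" where
  "minimal_b_atom V E t \<longleftrightarrow> b_atom V E t \<and> (\<forall>S. S \<subset> V \<longrightarrow> \<not> b_atom S (induced E S) t)"

end

theory Submission
  imports Defs
begin

definition pc :: "'a set \<Rightarrow> ('a \<Rightarrow> 'a \<Rightarrow> bool) \<Rightarrow> ('a \<Rightarrow> nat) \<Rightarrow> nat \<Rightarrow> bool" where
  "pc V E c k \<longleftrightarrow> c ` V \<subseteq> {1..k} \<and> (\<forall>u\<in>V. \<forall>v\<in>V. E u v \<longrightarrow> c u \<noteq> c v)"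

lemma compress:
  assumes "pc V E c k" "i \<in> {1..k}" "\<forall>v\<in>V. c v \<noteq> i"
  shows "\<exists>c'. pc V E c' (k - 1)"
proof -
  define g where "g m = (if m < i then m else m - 1)" for m :: nat
  have inj: "inj_on g ({1..k} - {i})" unfolding inj_on_def g_def by auto
  have "pc V E (g \<circ> c) (k - 1)"
    unfolding pc_def
  proof (intro conjI ballI impI subsetI)
    fix x assume "x \<in> (g \<circ> c) ` V"
    then obtain v where v: "v \<in> V" "x = g (c v)" by auto
    have "c v \<in> {1..k}" "c v \<noteq> i" using assms v unfolding pc_def by auto
    then show "x \<in> {1..k-1}" using v assms(2) unfolding g_def by auto
  next
    fix u v assume uv: "u \<in> V" "v \<in> V" "E u v"
    have "c u \<noteq> c v" using assms uv unfolding pc_def by auto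
    moreover have "c u \<in> {1..k} - {i}" "c v \<in> {1..k} - {i}" using assms uv unfolding pc_def by auto
    ultimately show "(g \<circ> c) u \<noteq> (g \<circ> c) v" using inj_onD[OF inj] by (metis comp_apply)
  qed
  then show ?thesis by blast
qed

lemma exists_b_coloring:
  assumes "graph V E"
  shows "\<exists>k c. b_coloring V E c k"
proof -
  have fin: "finite V" and sym: "\<And>u v. E u v \<Longrightarrow> E v u" and irr: "\<And>v. \<not> E v v"
    using assms unfolding graph_def by auto
  obtain f where f: "bij_betw f V {1..card V}"
  proof -
    from fin obtain h where "bij_betw h {0..<card V} V"
      using ex_bij_betw_nat_finite by blast
    then have "bij_betw (the_inv_into {0..<card V} h) V {0..<card V}"
      by (rule bij_betw_the_inv_into)
    then have "bij_betw (Suc \<circ> the_inv_into {0..<card V} h) V {1..card V}"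
      by (rule bij_betw_trans) (simp add: bij_betw_def inj_on_def image_Suc_atLeastLessThan atLeastLessThanSuc_atLeastAtMost)
    then show ?thesis using that by blast
  qed
  have "pc V E f (card V)"
    unfolding pc_def using f irr unfolding bij_betw_def inj_on_def by auto
  then have ex: "\<exists>k c. pc V E c k" by blast
  define k0 where "k0 = (LEAST k. \<exists>c. pc V E c k)"
  obtain c where c: "pc V E c k0" unfolding k0_def using LeastI_ex[OF ex] by blast
  have mink: "\<And>c'. \<not> pc V E c' (k0 - 1)" if "k0 > 0"
    using not_less_Least[of "k0 - 1" "\<lambda>k. \<exists>c. pc V E c k"] that unfolding k0_def[symmetric]
    by auto
  have surj: "c ` V = {1..k0}"
  proof (rule ccontr)
    assume "c ` V \<noteq> {1..k0}"
    moreover have "c ` V \<subseteq> {1..k0}" using c unfolding pc_def by simp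
    ultimately have "{1..k0} - c ` V \<noteq> {}" by auto
    then obtain i where i: "i \<in> {1..k0}" "i \<notin> c ` V" by blast
    then show False using compress[OF c i(1)] mink i(1) by auto
  qed
  have bv: "\<forall>i\<in>{1..k0}. \<exists>v\<in>V. c v = i \<and> b_vertex V E c k0 v"
  proof (rule ccontr)
    assume "\<not> ?thesis"
    then obtain i where i: "i \<in> {1..k0}" and nb: "\<And>v. v \<in> V \<Longrightarrow> c v = i \<Longrightarrow> \<not> b_vertex V E c k0 v"
      by auto
    define m where "m v = (SOME j. j \<in> {1..k0} - {c v} \<and> \<not> (\<exists>u\<in>V. E v u \<and> c u = j))" for v
    have m: "m v \<in> {1..k0} - {c v} \<and> \<not> (\<exists>u\<in>V. E v u \<and> c u = m v)" if "v \<in> V" "c v = i" for v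
    proof -
      have "\<exists>j. j \<in> {1..k0} - {c v} \<and> \<not> (\<exists>u\<in>V. E v u \<and> c u = j)"
        using nb[OF that] unfolding b_vertex_def by blast
      then show ?thesis unfolding m_def by (rule someI_ex)
    qed
    define c' where "c' v = (if c v = i then m v else c v)" for v
    have "pc V E c' k0"
      unfolding pc_def
    proof (intro conjI ballI impI subsetI)
      fix x assume "x \<in> c' ` V"
      then obtain v where "v \<in> V" "x = c' v" by auto
      then show "x \<in> {1..k0}" using m[of v] c unfolding c'_def pc_def by (auto split: if_splits)
    next
      fix u v assume uv: "u \<in> V" "v \<in> V" "E u v"
      have ne: "c u \<noteq> c v" using c uv unfolding pc_def by auto
      show "c' u \<noteq> c' v"
      proof (cases "c u = i")
        case True
        then have "c v \<noteq> i" using ne by auto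
        then show ?thesis using m[OF uv(1) True] uv True unfolding c'_def by auto
      next
        case False
        show ?thesis
        proof (cases "c v = i")
          case True
          then show ?thesis using m[OF uv(2) True] uv False sym[OF uv(3)] unfolding c'_def by auto
        next
          case False
          then show ?thesis using \<open>c u \<noteq> i\<close> ne unfolding c'_def by auto
        qed
      qed
    qed
    moreover have "\<forall>v\<in>V. c' v \<noteq> i" using m unfolding c'_def by auto
    ultimately show False using compress[of V E c' k0 i] i mink by auto
  qed
  have "b_coloring V E c k0"
    unfolding b_coloring_def proper_coloring_def using surj bv c unfolding pc_def by auto
  then show ?thesis by blast
qed

theorem mainTheorem6:
  fixes V :: "'a set" and E :: "'a \<Rightarrow> 'a \<Rightarrow> bool" and t :: nat
  assumes "graph V E" and "t > 0" and "b_chromatic_number V E \<ge> t"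
  shows "\<exists>S\<subseteq>V. minimal_b_atom S (induced E S) t"
proof -
  have fin: "finite V" and sym: "\<And>u v. E u v \<Longrightarrow> E v u"
    using assms(1) unfolding graph_def by auto
  let ?K = "{k. \<exists>c. b_coloring V E c k}"
  have bnd: "?K \<subseteq> {..card V}"
  proof
    fix k assume "k \<in> ?K"
    then obtain c where "c ` V = {1..k}" unfolding b_coloring_def proper_coloring_def by auto
    then have "card {1..k} \<le> card V" using card_image_le[OF fin, of c] by simp
    then show "k \<in> {..card V}" by simp
  qed
  have "finite ?K" using bnd finite_subset by blast
  moreover have "?K \<noteq> {}" using exists_b_coloring[OF assms(1)] by auto
  ultimately have "Max ?K \<in> ?K" by (rule Max_in)
  then obtain c k where bc: "b_coloring V E c k" and kt: "k \<ge> t"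
    using assms(3) unfolding b_chromatic_number_def by auto
  have surj: "c ` V = {1..k}" and propc: "\<And>u v. u \<in> V \<Longrightarrow> v \<in> V \<Longrightarrow> E u v \<Longrightarrow> c u \<noteq> c v"
    and bvx: "\<And>i. i \<in> {1..k} \<Longrightarrow> \<exists>v\<in>V. c v = i \<and> b_vertex V E c k v"
    using bc unfolding b_coloring_def proper_coloring_def by auto
  define cv where "cv i = (SOME v. v \<in> V \<and> c v = i \<and> b_vertex V E c k v)" for i
  have cv: "cv i \<in> V \<and> c (cv i) = i \<and> b_vertex V E c k (cv i)" if "i \<in> {1..t}" for i
    unfolding cv_def by (rule someI_ex) (use bvx[of i] that kt in auto)
  define w where "w i j = (SOME u. u \<in> V \<and> E (cv i) u \<and> c u = j)" for i j
  have w: "w i j \<in> V \<and> E (cv i) (w i j) \<and> c (w i j) = j" if "i \<in> {1..t}" "j \<in> {1..t}" "i \<noteq> j" for i j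
  proof -
    have "\<exists>u\<in>V. E (cv i) u \<and> c u = j" using cv[OF that(1)] that kt unfolding b_vertex_def by auto
    then show ?thesis unfolding w_def by (rule someI_ex[where P="\<lambda>u. u \<in> V \<and> E (cv i) u \<and> c u = j", OF bexE]) auto
  qed
  define D where "D j = insert (cv j) ((\<lambda>i. w i j) ` ({1..t} - {j}))" for j
  define S where "S = (\<Union>j\<in>{1..t}. D j)"
  have Dx: "x \<in> V \<and> c x = j" if j: "j \<in> {1..t}" and x: "x \<in> D j" for j x
  proof -
    from x consider "x = cv j" | i where "i \<in> {1..t}" "i \<noteq> j" "x = w i j" unfolding D_def by blast
    then show ?thesis
    proof cases
      case 1 then show ?thesis using cv[OF j] by simp
    next
      case (2 i) then show ?thesis using w[OF 2(1) j 2(2)] by simp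
    qed
  qed
  have Dsub: "D j \<subseteq> V" if "j \<in> {1..t}" for j using Dx that by auto
  have Dcol: "\<And>x. x \<in> D j \<Longrightarrow> c x = j" if "j \<in> {1..t}" for j using Dx that by auto
  have SV: "S \<subseteq> V" using Dsub unfolding S_def by blast
  have atom: "b_atom S (induced E S) t"
    unfolding b_atom_def
  proof (intro exI conjI)
    show "(\<Union>i\<in>{1..t}. D i) = S" unfolding S_def ..
    show "\<forall>i\<in>{1..t}. \<forall>j\<in>{1..t}. i \<noteq> j \<longrightarrow> D i \<inter> D j = {}"
      using Dcol by blast
    show "\<forall>i\<in>{1..t}. cv i \<in> D i \<and> card (D i) \<le> t \<and> (\<forall>u\<in>D i. \<forall>v\<in>D i. \<not> induced E S u v)"
    proof (intro ballI conjI)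
      fix i assume i: "i \<in> {1..t}"
      show "cv i \<in> D i" unfolding D_def by simp
      have "card (D i) \<le> Suc (card ((\<lambda>j. w j i) ` ({1..t} - {i})))"
        unfolding D_def by (simp add: card_insert_le_m1 card_insert_if)
      also have "card ((\<lambda>j. w j i) ` ({1..t} - {i})) \<le> card ({1..t} - {i})"
        by (rule card_image_le) simp
      also have "card ({1..t} - {i}) = t - 1" using i by simp
      finally show "card (D i) \<le> t" using assms(2) by simp
      fix u v assume "u \<in> D i" "v \<in> D i"
      then show "\<not> induced E S u v" using Dcol[OF i] Dsub[OF i] propc unfolding induced_def by fastforce
    qed
    show "\<forall>i\<in>{1..t}. \<forall>j\<in>{1..t}. i \<noteq> j \<longrightarrow> (\<exists>u\<in>D j. induced E S (cv i) u)"
    proof (intro ballI impI)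
      fix i j assume ij: "i \<in> {1..t}" "j \<in> {1..t}" "i \<noteq> j"
      have "w i j \<in> D j" using ij unfolding D_def by auto
      moreover have "cv i \<in> S" using ij unfolding S_def D_def by auto
      moreover have "w i j \<in> S" using ij \<open>w i j \<in> D j\<close> unfolding S_def by auto
      ultimately show "\<exists>u\<in>D j. induced E S (cv i) u" using w[OF ij] unfolding induced_def by auto
    qed
  qed
  let ?A = "{S'. S' \<subseteq> S \<and> b_atom S' (induced E S') t}"
  have "finite S" using SV fin finite_subset by blast
  then have "finite ?A" by (rule rev_finite_subset[OF finite_Pow_iff[THEN iffD2]]) auto
  moreover have "?A \<noteq> {}" using atom by auto
  ultimately have "\<exists>m\<in>?A. \<forall>b\<in>?A. b \<le> m \<longrightarrow> m = b" by (rule finite_has_minimal)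
  then obtain M where M: "M \<in> ?A" and Mmin: "\<forall>b\<in>?A. b \<le> M \<longrightarrow> M = b"
    by (elim bexE)
  have "minimal_b_atom M (induced E M) t"
    unfolding minimal_b_atom_def
  proof (intro conjI allI impI)
    show "b_atom M (induced E M) t" using M by auto
    fix S' assume S': "S' \<subset> M"
    have "induced (induced E M) S' = induced E S'" using S' unfolding induced_def by (auto intro!: ext)
    show "\<not> b_atom S' (induced (induced E M) S') t"
    proof
      assume "b_atom S' (induced (induced E M) S') t"
      then have "b_atom S' (induced E S') t" using \<open>induced (induced E M) S' = induced E S'\<close> by simp
      moreover have "S' \<subseteq> S" using S' M by blast
      ultimately have "S' \<in> ?A" by simp
      then have "M = S'" using Mmin S' by blast
      then show False using S' by simp
    qed
  qed
  moreover have "M \<subseteq> V" using M SV by auto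
  ultimately show ?thesis by blast
qed

end
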